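(* Let $n,m \in \mathbb{N}$, $a \in \Delta_n^+$, $b \in \Delta_m^+$, and $\lambda > 0$. Define $\Phi_\lambda \colon \mathbb{R}^{n\times m} \to \Pi_{a,b}^+$ by \[ \Phi_\lambda(C) = \operatorname{argmin}_{\pi \in \Pi_{a,b}} \big(\langle C, \pi\rangle + \lambda h(\pi)\big). \] Then for all $C_1, C_2 \in \mathbb{R}^{n\times m}$, \[ \|\Phi_\lambda(C_1) - \Phi_\lambda(C_2)\|_1 \le \frac{\|C_1 - C_2\|_\infty}{\lambda}. \]
   Context: $\Delta_n^+ := \{a \in \mathbb{R}^n : a_i > 0\ \forall i,\ \sum_i a_i = 1\}$. $\Pi_{a,b} := \{\pi \in \mathbb{R}_+^{n\times m} : \pi 1_m = a,\ \pi^\top 1_n = b\}$ and $\Pi_{a,b}^+$ is its subset of matrices with all entries strictly positive. $h(\pi) := \sum_{i,j}\pi_{ij}\log\frac{\pi_{ij}}{e}$ (with $0\log 0=0$); the minimizer defining $\Phi_\lambda(C)$ exists, is unique, and lies in $\Pi_{a,b}^+$. $\langle\cdot,\cdot\rangle$ is the Frobenius inner product; for a matrix $A$, $\|A\|_1 := \sum_{i,j}|A_{ij}|$ and $\|A\|_\infty := \max_{i,j}|A_{ij}|$. *)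

theory Defs
  imports Complex_Main
begin

definition pos_simplex :: "('i::finite \<Rightarrow> real) set" where
  "pos_simplex = {a. (\<forall>i. a i > 0) \<and> (\<Sum>i\<in>UNIV. a i) = 1}"

definition transport_polytope ::
  "('n::finite \<Rightarrow> real) \<Rightarrow> ('m::finite \<Rightarrow> real) \<Rightarrow> ('n \<Rightarrow> 'm \<Rightarrow> real) set" where
  "transport_polytope a b = {p. (\<forall>i j. p i j \<ge> 0) \<and>
      (\<forall>i. (\<Sum>j\<in>UNIV. p i j) = a i) \<and> (\<forall>j. (\<Sum>i\<in>UNIV. p i j) = b j)}"

definition neg_entropy :: "('n::finite \<Rightarrow> 'm::finite \<Rightarrow> real) \<Rightarrow> real" where
  "neg_entropy p = (\<Sum>i\<in>UNIV. \<Sum>j\<in>UNIV. if p i j = 0 then 0 else p i j * ln (p i j / exp 1))"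

definition frob_inner :: "('n::finite \<Rightarrow> 'm::finite \<Rightarrow> real) \<Rightarrow> ('n \<Rightarrow> 'm \<Rightarrow> real) \<Rightarrow> real" where
  "frob_inner A B = (\<Sum>i\<in>UNIV. \<Sum>j\<in>UNIV. A i j * B i j)"

definition mat_norm1 :: "('n::finite \<Rightarrow> 'm::finite \<Rightarrow> real) \<Rightarrow> real" where
  "mat_norm1 A = (\<Sum>i\<in>UNIV. \<Sum>j\<in>UNIV. \<bar>A i j\<bar>)"

definition mat_norm_inf :: "('n::finite \<Rightarrow> 'm::finite \<Rightarrow> real) \<Rightarrow> real" where
  "mat_norm_inf A = Max {\<bar>A i j\<bar> | i j. True}"

definition Phi ::
  "real \<Rightarrow> ('n::finite \<Rightarrow> real) \<Rightarrow> ('m::finite \<Rightarrow> real) \<Rightarrow> ('n \<Rightarrow> 'm \<Rightarrow> real) \<Rightarrow> ('n \<Rightarrow> 'm \<Rightarrow> real)" where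
  "Phi lam a b C = (THE p. p \<in> transport_polytope a b \<and>
      (\<forall>q\<in>transport_polytope a b.
         frob_inner C p + lam * neg_entropy p \<le> frob_inner C q + lam * neg_entropy q))"

end

theory Submission imports Defs "HOL-Analysis.Analysis" "HOL-Real_Asymp.Real_Asymp" begin

definition phi :: "real \<Rightarrow> real" where
  "phi x = (if x = 0 then 0 else x * ln (x / exp 1))"

lemma phi_alt: "x \<ge> 0 \<Longrightarrow> phi x = x * ln x - x"
  by (cases "x = 0") (auto simp: phi_def ln_div algebra_simps)

lemma phi_cont: "continuous_on {0..} phi"
proof -
  have "continuous_on {0..} (\<lambda>x::real. x * ln x - x)"
  proof (clarsimp simp: continuous_on_eq_continuous_within)
    fix x :: real assume x: "0 \<le> x"
    show "continuous (at x within {0..}) (\<lambda>x. x * ln x - x)"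
    proof (cases "x = 0")
      case True
      have "((\<lambda>x::real. x * ln x - x) \<longlongrightarrow> 0) (at_right 0)" by real_asymp
      then show ?thesis using True
        by (simp add: continuous_within at_within_Ici_at_right)
    next
      case False
      then have "isCont (\<lambda>x. x * ln x - x) x" using x
        by (intro continuous_intros) auto
      then show ?thesis using continuous_at_imp_continuous_at_within by blast
    qed
  qed
  then show ?thesis by (rule continuous_on_cong[THEN iffD1, rotated -1]) (auto simp: phi_alt)
qed

lemma phi_tangent:
  assumes x: "x > 0" and y: "y \<ge> 0"
  shows "phi y \<ge> phi x + ln x * (y - x)"
proof (cases "y = 0")
  case True
  then show ?thesis using x by (simp add: phi_alt algebra_simps)
next
  case False
  then have yp: "y > 0" using y by simp
  have "ln (x / y) \<le> x / y - 1" using x yp by (intro ln_le_minus_one) auto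
  then have "y * ln (x / y) \<le> y * (x / y - 1)" using yp by (intro mult_left_mono) auto
  moreover have "y * ln (x / y) = y * ln x - y * ln y" using x yp by (simp add: ln_div algebra_simps)
  moreover have "y * (x / y - 1) = x - y" using yp by (simp add: field_simps)
  ultimately have "y * ln x - y * ln y \<le> x - y" by simp
  then show ?thesis using x yp by (simp add: phi_alt algebra_simps)
qed

lemma ln_ineq_aux:
  fixes t :: real assumes "1 \<le> t" shows "2 * (t - 1) / (t + 1) \<le> ln t"
proof -
  let ?h = "\<lambda>t::real. ln t - 2 * (t - 1) / (t + 1)"
  have "?h 1 \<le> ?h t"
  proof (rule DERIV_nonneg_imp_increasing_open[OF assms])
    fix x :: real assume x: "1 < x" "x < t"
    have "DERIV ?h x :> (1 / x - 4 / (x + 1)^2)"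
      using x by (auto intro!: derivative_eq_intros simp: field_simps power2_eq_square)
    moreover have "1 / x - 4 / (x + 1)^2 \<ge> 0"
    proof -
      have "4 * x \<le> (x + 1)^2"
      proof -
        have "(x + 1)^2 - 4 * x = (x - 1)^2" by (simp add: power2_eq_square algebra_simps)
        moreover have "(x - 1)^2 \<ge> 0" by simp
        ultimately show ?thesis by linarith
      qed
      then show ?thesis using x by (simp add: field_simps)
    qed
    ultimately show "\<exists>y. DERIV ?h x :> y \<and> 0 \<le> y" by blast
  next
    show "continuous_on {1..t} ?h" by (intro continuous_intros) auto
  qed
  then show ?thesis by simp
qed

lemma ln_ineq_aux2:
  fixes t :: real assumes "0 < t" "t \<le> 1" shows "ln t \<le> 2 * (t - 1) / (t + 1)"
proof -
  let ?h = "\<lambda>t::real. ln t - 2 * (t - 1) / (t + 1)"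
  have "?h t \<le> ?h 1"
  proof (rule DERIV_nonneg_imp_increasing_open[OF assms(2)])
    fix x :: real assume x: "t < x" "x < 1"
    have "DERIV ?h x :> (1 / x - 4 / (x + 1)^2)"
      using x assms by (auto intro!: derivative_eq_intros simp: field_simps power2_eq_square)
    moreover have "1 / x - 4 / (x + 1)^2 \<ge> 0"
    proof -
      have "4 * x \<le> (x + 1)^2"
      proof -
        have "(x + 1)^2 - 4 * x = (x - 1)^2" by (simp add: power2_eq_square algebra_simps)
        moreover have "(x - 1)^2 \<ge> 0" by simp
        ultimately show ?thesis by linarith
      qed
      then show ?thesis using x assms by (simp add: field_simps)
    qed
    ultimately show "\<exists>y. DERIV ?h x :> y \<and> 0 \<le> y" by blast
  next
    show "continuous_on {t..1} ?h" using assms by (intro continuous_intros) auto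
  qed
  then show ?thesis by simp
qed

lemma sym_kl_entry:
  fixes p q :: real assumes p: "p > 0" and q: "q > 0"
  shows "(ln p - ln q) * (p - q) \<ge> (p - q)^2 / ((p + q) / 2)"
proof -
  define t where "t = p / q"
  have t: "t > 0" using p q by (simp add: t_def)
  have pe: "p = t * q" using q by (simp add: t_def)
  have lnd: "ln p - ln q = ln t" using p q by (simp add: t_def ln_div)
  have eq: "2 * (t - 1)^2 / (t + 1) = 2 * (t - 1) / (t + 1) * (t - 1)"
    using t by (simp add: power2_eq_square field_simps)
  have key: "2 * (t - 1)^2 / (t + 1) \<le> ln t * (t - 1)"
  proof (cases "t \<ge> 1")
    case True
    then have "2 * (t - 1) / (t + 1) * (t - 1) \<le> ln t * (t - 1)"
      using ln_ineq_aux[OF True] by (intro mult_right_mono) auto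
    then show ?thesis using eq by linarith
  next
    case False
    then have "ln t * (t - 1) \<ge> 2 * (t - 1) / (t + 1) * (t - 1)"
      using ln_ineq_aux2[OF t] by (intro mult_right_mono_neg) auto
    then show ?thesis using eq by linarith
  qed
  have "(p - q)^2 / ((p + q) / 2) = (q * (t - 1))^2 / ((q * (t + 1)) / 2)"
    by (simp add: pe algebra_simps)
  also have "\<dots> = q * (2 * (t - 1)^2 / (t + 1))"
  proof -
    have "t + 1 \<noteq> 0" using t by simp
    then show ?thesis using q by (simp add: power_mult_distrib power2_eq_square divide_simps)
  qed
  also have "\<dots> \<le> q * (ln t * (t - 1))" using key q by (intro mult_left_mono) auto
  also have "\<dots> = (ln p - ln q) * (p - q)"
  proof -
    have pq: "p - q = q * (t - 1)" by (simp add: pe algebra_simps)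
    show ?thesis by (simp only: lnd pq) (simp add: algebra_simps)
  qed
  finally show ?thesis .
qed


definition Fobj :: "real \<Rightarrow> ('n::finite \<Rightarrow> 'm::finite \<Rightarrow> real) \<Rightarrow> ('n \<Rightarrow> 'm \<Rightarrow> real) \<Rightarrow> real" where
  "Fobj lam C p = frob_inner C p + lam * neg_entropy p"

lemma Fobj_eq: "Fobj lam C p = (\<Sum>i\<in>UNIV. \<Sum>j\<in>UNIV. C i j * p i j + lam * phi (p i j))"
  by (simp add: Fobj_def frob_inner_def neg_entropy_def phi_def sum.distrib sum_distrib_left)

lemma tp_entry_le1:
  assumes "a \<in> pos_simplex" "p \<in> transport_polytope a b"
  shows "p i j \<le> 1"
proof -
  have "p i j \<le> (\<Sum>j\<in>UNIV. p i j)"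
    using assms(2) by (intro member_le_sum) (auto simp: transport_polytope_def)
  also have "\<dots> = a i" using assms(2) by (simp add: transport_polytope_def)
  also have "\<dots> \<le> (\<Sum>i\<in>UNIV. a i)"
    using assms(1) by (intro member_le_sum) (auto simp: pos_simplex_def less_imp_le)
  also have "\<dots> = 1" using assms(1) by (simp add: pos_simplex_def)
  finally show ?thesis .
qed

lemma tp_mix:
  assumes "p \<in> transport_polytope a b" "q \<in> transport_polytope a b" "0 \<le> t" "t \<le> 1"
  shows "(\<lambda>i j. p i j + t * (q i j - p i j)) \<in> transport_polytope a b"
proof -
  have nn: "0 \<le> p i j + t * (q i j - p i j)" for i j
  proof -
    have "p i j + t * (q i j - p i j) = (1 - t) * p i j + t * q i j" by (simp add: algebra_simps)
    also have "\<dots> \<ge> 0" using assms by (auto simp: transport_polytope_def)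
    finally show ?thesis .
  qed
  show ?thesis using assms nn
    by (simp add: transport_polytope_def sum.distrib sum_subtractf sum_distrib_left[symmetric])
qed

lemma tp_prod:
  assumes "a \<in> pos_simplex" "b \<in> pos_simplex"
  shows "(\<lambda>i j. a i * b j) \<in> transport_polytope a b"
  using assms by (auto simp: transport_polytope_def pos_simplex_def sum_distrib_left[symmetric]
      sum_distrib_right[symmetric] less_imp_le)

lemma tp_sum1:
  assumes "a \<in> pos_simplex" "p \<in> transport_polytope a b"
  shows "(\<Sum>i\<in>UNIV. \<Sum>j\<in>UNIV. p i j) = 1"
  using assms by (simp add: transport_polytope_def pos_simplex_def)

definition is_min where
  "is_min lam a b C p \<longleftrightarrow> p \<in> transport_polytope a b \<and>
      (\<forall>q\<in>transport_polytope a b.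
         frob_inner C p + lam * neg_entropy p \<le> frob_inner C q + lam * neg_entropy q)"

lemma ineq_I:
  assumes min: "is_min lam a b C p" and lam: "lam > 0"
    and q: "q \<in> transport_polytope a b" and t: "0 < t" "t \<le> 1"
    and pos: "\<And>i j. p i j + t * (q i j - p i j) > 0"
  shows "0 \<le> (\<Sum>i\<in>UNIV. \<Sum>j\<in>UNIV. C i j * (q i j - p i j)
                + lam * (ln (p i j + t * (q i j - p i j)) * (q i j - p i j)))"
    (is "0 \<le> ?G")
proof -
  define pt where "pt = (\<lambda>i j. p i j + t * (q i j - p i j))"
  have pP: "p \<in> transport_polytope a b" using min by (simp add: is_min_def)
  have ptP: "pt \<in> transport_polytope a b" unfolding pt_def using pP q t by (intro tp_mix) auto
  have le: "Fobj lam C p \<le> Fobj lam C pt" using min ptP by (simp add: is_min_def Fobj_def)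
  have entry: "C i j * pt i j + lam * phi (pt i j) \<le> (C i j * p i j + lam * phi (p i j))
       + t * (C i j * (q i j - p i j) + lam * (ln (p i j + t * (q i j - p i j)) * (q i j - p i j)))"
    for i j
  proof -
    have p0: "p i j \<ge> 0" using pP by (simp add: transport_polytope_def)
    have "phi (p i j) \<ge> phi (pt i j) + ln (pt i j) * (p i j - pt i j)"
      using pos[of i j] p0 unfolding pt_def by (intro phi_tangent) auto
    then have "lam * phi (pt i j) \<le> lam * (phi (p i j) + t * (ln (pt i j) * (q i j - p i j)))"
      using lam by (intro mult_left_mono) (auto simp: pt_def algebra_simps)
    then show ?thesis by (simp add: pt_def algebra_simps)
  qed
  have "Fobj lam C pt \<le> (\<Sum>i\<in>UNIV. \<Sum>j\<in>UNIV. (C i j * p i j + lam * phi (p i j))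
       + t * (C i j * (q i j - p i j) + lam * (ln (p i j + t * (q i j - p i j)) * (q i j - p i j))))"
    unfolding Fobj_eq by (intro sum_mono entry)
  also have "\<dots> = Fobj lam C p + t * ?G"
    by (simp add: Fobj_eq sum.distrib sum_distrib_left distrib_left)
  finally have "0 \<le> t * ?G" using le by simp
  then show ?thesis using t by (simp add: zero_le_mult_iff)
qed


lemma sum_if2: "(\<Sum>i\<in>(UNIV::'n::finite set). \<Sum>j\<in>(UNIV::'m::finite set). if i = i0 \<and> j = j0 then X else 0) = (X::real)"
proof -
  have "(\<Sum>j\<in>(UNIV::'m set). if i = i0 \<and> j = j0 then X else 0) = (if i = i0 then X else 0)" for i
    by (cases "i = i0") auto
  then show ?thesis by simp
qed

lemma min_pos:
  assumes min: "is_min lam a b C p" and lam: "lam > 0"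
    and a: "a \<in> pos_simplex" and b: "b \<in> pos_simplex"
  shows "p i0 j0 > 0"
proof (rule ccontr)
  assume "\<not> p i0 j0 > 0"
  have pP: "p \<in> transport_polytope a b" using min by (simp add: is_min_def)
  then have pnn: "\<And>i j. p i j \<ge> 0" by (simp add: transport_polytope_def)
  have p0: "p i0 j0 = 0" using pnn[of i0 j0] \<open>\<not> p i0 j0 > 0\<close> by simp
  have ple: "\<And>i j. p i j \<le> 1" using tp_entry_le1[OF a pP] .
  define q where "q = (\<lambda>i j. a i * b j)"
  have qP: "q \<in> transport_polytope a b" unfolding q_def using tp_prod[OF a b] .
  have qpos: "\<And>i j. q i j > 0" using a b by (simp add: q_def pos_simplex_def)
  have qle: "\<And>i j. q i j \<le> 1" using tp_entry_le1[OF a qP] .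
  define d where "d = (\<lambda>i j. q i j - p i j)"
  define K where "K = (\<Sum>i\<in>UNIV. \<Sum>j\<in>UNIV. \<bar>C i j * d i j\<bar> + lam * \<bar>ln (q i j) * d i j\<bar>)"
  define q0 where "q0 = q i0 j0"
  have q0pos: "q0 > 0" using qpos by (simp add: q0_def)
  define t where "t = min 1 (exp (- K / (lam * q0) - 1) / q0)"
  have t0: "t > 0" using q0pos by (simp add: t_def)
  have t1: "t \<le> 1" by (simp add: t_def)
  have pos: "p i j + t * (q i j - p i j) > 0" for i j
  proof -
    have "p i j + t * (q i j - p i j) = (1 - t) * p i j + t * q i j" by (simp add: algebra_simps)
    moreover have "(1 - t) * p i j \<ge> 0" using t1 pnn[of i j] by simp
    moreover have "t * q i j > 0" using t0 qpos[of i j] by simp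
    ultimately show ?thesis by linarith
  qed
  have G: "0 \<le> (\<Sum>i\<in>UNIV. \<Sum>j\<in>UNIV. C i j * (q i j - p i j)
                + lam * (ln (p i j + t * (q i j - p i j)) * (q i j - p i j)))"
    by (rule ineq_I[OF min lam qP t0 t1 pos])
  have trm: "C i j * (q i j - p i j) + lam * (ln (p i j + t * (q i j - p i j)) * (q i j - p i j))
      \<le> (\<bar>C i j * d i j\<bar> + lam * \<bar>ln (q i j) * d i j\<bar>) +
         (if i = i0 \<and> j = j0 then lam * (q0 * ln (t * q0)) else 0)" for i j
  proof -
    have c: "C i j * (q i j - p i j) \<le> \<bar>C i j * d i j\<bar>" by (simp add: d_def)
    have "lam * (ln (p i j + t * (q i j - p i j)) * (q i j - p i j))
       \<le> lam * \<bar>ln (q i j) * d i j\<bar> + (if i = i0 \<and> j = j0 then lam * (q0 * ln (t * q0)) else 0)"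
    proof (cases "i = i0 \<and> j = j0")
      case True
      then have "lam * (ln (p i j + t * (q i j - p i j)) * (q i j - p i j)) = lam * (q0 * ln (t * q0))"
        using p0 by (simp add: q0_def algebra_simps)
      then show ?thesis using True lam by simp
    next
      case False
      have "ln (p i j + t * (q i j - p i j)) * (q i j - p i j) \<le> \<bar>ln (q i j) * d i j\<bar>"
      proof (cases "q i j - p i j \<ge> 0")
        case True
        have "p i j + t * (q i j - p i j) = (1 - t) * p i j + t * q i j" by (simp add: algebra_simps)
        also have "\<dots> \<le> (1 - t) * 1 + t * 1"
          using t0 t1 ple[of i j] qle[of i j] by (intro add_mono mult_left_mono) auto
        finally have "ln (p i j + t * (q i j - p i j)) \<le> 0" using pos[of i j] by simp
        then have "ln (p i j + t * (q i j - p i j)) * (q i j - p i j) \<le> 0"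
          using True by (simp add: mult_nonpos_nonneg)
        then show ?thesis by linarith
      next
        case False
        have "q i j \<le> p i j + t * (q i j - p i j)"
        proof -
          have "(1 - t) * (q i j - p i j) \<le> 0" using False t1 by (simp add: mult_nonneg_nonpos)
          then show ?thesis by (simp add: algebra_simps)
        qed
        then have "ln (q i j) \<le> ln (p i j + t * (q i j - p i j))" using qpos[of i j] by simp
        then have "ln (p i j + t * (q i j - p i j)) * (q i j - p i j) \<le> ln (q i j) * (q i j - p i j)"
          using False by (intro mult_right_mono_neg) auto
        then show ?thesis by (simp add: d_def)
      qed
      then have "lam * (ln (p i j + t * (q i j - p i j)) * (q i j - p i j)) \<le> lam * \<bar>ln (q i j) * d i j\<bar>"
        using lam by (intro mult_left_mono) auto
      moreover have "(if i = i0 \<and> j = j0 then lam * (q0 * ln (t * q0)) else 0) = 0"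
        using False by (rule if_not_P)
      ultimately show ?thesis by linarith
    qed
    then show ?thesis using c by linarith
  qed
  have "(\<Sum>i\<in>UNIV. \<Sum>j\<in>UNIV. C i j * (q i j - p i j)
                + lam * (ln (p i j + t * (q i j - p i j)) * (q i j - p i j)))
     \<le> (\<Sum>i\<in>UNIV. \<Sum>j\<in>UNIV. (\<bar>C i j * d i j\<bar> + lam * \<bar>ln (q i j) * d i j\<bar>) +
         (if i = i0 \<and> j = j0 then lam * (q0 * ln (t * q0)) else 0))"
    by (intro sum_mono trm)
  also have "\<dots> = K + lam * (q0 * ln (t * q0))"
    by (simp only: sum.distrib K_def sum_if2)
  also have "\<dots> \<le> K + lam * (q0 * (- K / (lam * q0) - 1))"
  proof -
    have "t * q0 \<le> exp (- K / (lam * q0) - 1)"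
      using q0pos by (simp add: t_def min_def field_simps)
    then have "ln (t * q0) \<le> ln (exp (- K / (lam * q0) - 1))"
      using t0 q0pos by (subst ln_le_cancel_iff) auto
    then have "ln (t * q0) \<le> - K / (lam * q0) - 1" by simp
    then show ?thesis using lam q0pos by (intro add_left_mono mult_left_mono) auto
  qed
  also have "\<dots> = - lam * q0" using lam q0pos by (simp add: field_simps)
  finally have "0 \<le> - lam * q0" using G by linarith
  moreover have "lam * q0 > 0" using lam q0pos by simp
  ultimately show False by linarith
qed

lemma foc:
  assumes min: "is_min lam a b C p" and lam: "lam > 0"
    and ppos: "\<And>i j. p i j > 0" and q: "q \<in> transport_polytope a b"
  shows "0 \<le> (\<Sum>i\<in>UNIV. \<Sum>j\<in>UNIV. C i j * (q i j - p i j) + lam * (ln (p i j) * (q i j - p i j)))"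
proof -
  define G where "G = (\<lambda>t. \<Sum>i\<in>UNIV. \<Sum>j\<in>UNIV. C i j * (q i j - p i j)
                + lam * (ln (p i j + t * (q i j - p i j)) * (q i j - p i j)))"
  have qnn: "\<And>i j. q i j \<ge> 0" using q by (simp add: transport_polytope_def)
  have lim: "(G \<longlongrightarrow> G 0) (at_right 0)"
  proof -
    have pne: "\<And>i j. p i j \<noteq> 0" using ppos by (metis less_irrefl)
    show ?thesis unfolding G_def by (intro tendsto_intros) (simp add: pne)
  qed
  have ev: "eventually (\<lambda>t. 0 \<le> G t) (at_right 0)"
    unfolding eventually_at_right_field
  proof (intro exI[of _ 1] conjI allI impI)
    fix t :: real assume t: "0 < t" "t < 1"
    have pos: "p i j + t * (q i j - p i j) > 0" for i j
    proof -
      have "p i j + t * (q i j - p i j) = (1 - t) * p i j + t * q i j" by (simp add: algebra_simps)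
      moreover have "(1 - t) * p i j > 0" using t ppos[of i j] by simp
      moreover have "t * q i j \<ge> 0" using t qnn[of i j] by simp
      ultimately show ?thesis by linarith
    qed
    show "0 \<le> G t" unfolding G_def using t by (intro ineq_I[OF min lam q _ _ pos]) auto
  qed simp
  have "0 \<le> G 0" by (rule tendsto_lowerbound[OF lim ev]) simp
  then show ?thesis by (simp add: G_def)
qed


lemma skl:
  fixes p q :: "'n::finite \<Rightarrow> 'm::finite \<Rightarrow> real"
  assumes pp: "\<And>i j. p i j > 0" and qp: "\<And>i j. q i j > 0"
    and ps: "(\<Sum>i\<in>UNIV. \<Sum>j\<in>UNIV. p i j) = 1" and qs: "(\<Sum>i\<in>UNIV. \<Sum>j\<in>UNIV. q i j) = 1"
  shows "(\<Sum>i\<in>UNIV. \<Sum>j\<in>UNIV. \<bar>p i j - q i j\<bar>)^2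
         \<le> (\<Sum>i\<in>UNIV. \<Sum>j\<in>UNIV. (ln (p i j) - ln (q i j)) * (p i j - q i j))"
proof -
  define D where "D = (\<Sum>i\<in>UNIV. \<Sum>j\<in>UNIV. \<bar>p i j - q i j\<bar>)"
  define s where "s = (\<lambda>i j. (p i j + q i j) / 2)"
  have spos: "\<And>i j. s i j > 0" using pp qp by (simp add: s_def add_pos_pos)
  have ss: "(\<Sum>i\<in>UNIV. \<Sum>j\<in>UNIV. s i j) = 1"
    using ps qs by (simp add: s_def sum.distrib sum_divide_distrib[symmetric])
  have ent: "(\<bar>p i j - q i j\<bar> - D * s i j)^2 / s i j
      = (p i j - q i j)^2 / s i j - 2 * D * \<bar>p i j - q i j\<bar> + D^2 * s i j" for i j
  proof -
    have "s i j \<noteq> 0" using spos[of i j] by simp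
    then show ?thesis by (simp add: power2_eq_square field_simps abs_mult_self_eq)
  qed
  have "0 \<le> (\<Sum>i\<in>UNIV. \<Sum>j\<in>UNIV. (\<bar>p i j - q i j\<bar> - D * s i j)^2 / s i j)"
    using spos by (intro sum_nonneg) (simp add: less_imp_le)
  also have "\<dots> = (\<Sum>i\<in>UNIV. \<Sum>j\<in>UNIV. (p i j - q i j)^2 / s i j)
      - 2 * D * (\<Sum>i\<in>UNIV. \<Sum>j\<in>UNIV. \<bar>p i j - q i j\<bar>) + D^2 * (\<Sum>i\<in>UNIV. \<Sum>j\<in>UNIV. s i j)"
    by (simp only: ent sum.distrib sum_subtractf sum_distrib_left)
  also have "\<dots> = (\<Sum>i\<in>UNIV. \<Sum>j\<in>UNIV. (p i j - q i j)^2 / s i j) - D^2"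
    by (simp add: ss D_def[symmetric] power2_eq_square)
  finally have "D^2 \<le> (\<Sum>i\<in>UNIV. \<Sum>j\<in>UNIV. (p i j - q i j)^2 / s i j)" by simp
  also have "\<dots> \<le> (\<Sum>i\<in>UNIV. \<Sum>j\<in>UNIV. (ln (p i j) - ln (q i j)) * (p i j - q i j))"
    unfolding s_def by (intro sum_mono sym_kl_entry pp qp)
  finally show ?thesis by (simp add: D_def)
qed

lemma norm_inf_ge:
  fixes A :: "'n::finite \<Rightarrow> 'm::finite \<Rightarrow> real"
  shows "\<bar>A i j\<bar> \<le> mat_norm_inf A"
proof -
  have fin: "finite {\<bar>A i j\<bar> | i j. True}"
    by (rule finite_subset[of _ "(\<lambda>(i,j). \<bar>A i j\<bar>) ` UNIV"]) auto
  show ?thesis unfolding mat_norm_inf_def by (rule Max_ge[OF fin]) auto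
qed

lemma main_bound:
  assumes m1: "is_min lam a b C1 p1" and m2: "is_min lam a b C2 p2" and lam: "lam > 0"
    and a: "a \<in> pos_simplex" and b: "b \<in> pos_simplex"
  shows "mat_norm1 (\<lambda>i j. p1 i j - p2 i j) \<le> mat_norm_inf (\<lambda>i j. C1 i j - C2 i j) / lam"
proof -
  define M where "M = mat_norm_inf (\<lambda>i j. C1 i j - C2 i j)"
  define D where "D = mat_norm1 (\<lambda>i j. p1 i j - p2 i j)"
  have p1P: "p1 \<in> transport_polytope a b" using m1 by (simp add: is_min_def)
  have p2P: "p2 \<in> transport_polytope a b" using m2 by (simp add: is_min_def)
  have pos1: "\<And>i j. p1 i j > 0" using min_pos[OF m1 lam a b] .
  have pos2: "\<And>i j. p2 i j > 0" using min_pos[OF m2 lam a b] .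
  have f1: "0 \<le> (\<Sum>i\<in>UNIV. \<Sum>j\<in>UNIV. C1 i j * (p2 i j - p1 i j) + lam * (ln (p1 i j) * (p2 i j - p1 i j)))"
    by (rule foc[OF m1 lam pos1 p2P])
  have f2: "0 \<le> (\<Sum>i\<in>UNIV. \<Sum>j\<in>UNIV. C2 i j * (p1 i j - p2 i j) + lam * (ln (p2 i j) * (p1 i j - p2 i j)))"
    by (rule foc[OF m2 lam pos2 p1P])
  have "(\<Sum>i\<in>UNIV. \<Sum>j\<in>UNIV. C1 i j * (p2 i j - p1 i j) + lam * (ln (p1 i j) * (p2 i j - p1 i j)))
      + (\<Sum>i\<in>UNIV. \<Sum>j\<in>UNIV. C2 i j * (p1 i j - p2 i j) + lam * (ln (p2 i j) * (p1 i j - p2 i j)))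
      = (\<Sum>i\<in>UNIV. \<Sum>j\<in>UNIV. (C1 i j * (p2 i j - p1 i j) + lam * (ln (p1 i j) * (p2 i j - p1 i j)))
          + (C2 i j * (p1 i j - p2 i j) + lam * (ln (p2 i j) * (p1 i j - p2 i j))))"
    by (simp add: sum.distrib)
  also have "\<dots> = (\<Sum>i\<in>UNIV. \<Sum>j\<in>UNIV. (C1 i j - C2 i j) * (p2 i j - p1 i j)
          - lam * ((ln (p2 i j) - ln (p1 i j)) * (p2 i j - p1 i j)))"
    by (rule sum.cong[OF refl], rule sum.cong[OF refl]) (simp add: algebra_simps)
  also have "\<dots> = (\<Sum>i\<in>UNIV. \<Sum>j\<in>UNIV. (C1 i j - C2 i j) * (p2 i j - p1 i j))
          - lam * (\<Sum>i\<in>UNIV. \<Sum>j\<in>UNIV. (ln (p2 i j) - ln (p1 i j)) * (p2 i j - p1 i j))"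
    by (simp only: sum_subtractf sum_distrib_left)
  finally have ineq: "lam * (\<Sum>i\<in>UNIV. \<Sum>j\<in>UNIV. (ln (p2 i j) - ln (p1 i j)) * (p2 i j - p1 i j))
      \<le> (\<Sum>i\<in>UNIV. \<Sum>j\<in>UNIV. (C1 i j - C2 i j) * (p2 i j - p1 i j))"
    using f1 f2 by linarith
  have Deq: "D = (\<Sum>i\<in>UNIV. \<Sum>j\<in>UNIV. \<bar>p2 i j - p1 i j\<bar>)"
    by (simp add: D_def mat_norm1_def abs_minus_commute)
  have sk: "D^2 \<le> (\<Sum>i\<in>UNIV. \<Sum>j\<in>UNIV. (ln (p2 i j) - ln (p1 i j)) * (p2 i j - p1 i j))"
    unfolding Deq by (rule skl[OF pos2 pos1 tp_sum1[OF a p2P] tp_sum1[OF a p1P]])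
  have up: "(\<Sum>i\<in>UNIV. \<Sum>j\<in>UNIV. (C1 i j - C2 i j) * (p2 i j - p1 i j)) \<le> M * D"
  proof -
    have "(\<Sum>i\<in>UNIV. \<Sum>j\<in>UNIV. (C1 i j - C2 i j) * (p2 i j - p1 i j))
        \<le> (\<Sum>i\<in>UNIV. \<Sum>j\<in>UNIV. M * \<bar>p2 i j - p1 i j\<bar>)"
    proof (intro sum_mono)
      fix i j
      have "(C1 i j - C2 i j) * (p2 i j - p1 i j) \<le> \<bar>C1 i j - C2 i j\<bar> * \<bar>p2 i j - p1 i j\<bar>"
        by (metis abs_ge_self abs_mult)
      also have "\<dots> \<le> M * \<bar>p2 i j - p1 i j\<bar>"
        unfolding M_def by (intro mult_right_mono norm_inf_ge[of "\<lambda>i j. C1 i j - C2 i j", simplified]) auto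
      finally show "(C1 i j - C2 i j) * (p2 i j - p1 i j) \<le> M * \<bar>p2 i j - p1 i j\<bar>" .
    qed
    also have "\<dots> = M * D" by (simp add: Deq sum_distrib_left)
    finally show ?thesis .
  qed
  have M0: "M \<ge> 0" unfolding M_def
    using norm_inf_ge[of "\<lambda>i j. C1 i j - C2 i j" undefined undefined] by linarith
  have D0: "D \<ge> 0" unfolding Deq by (intro sum_nonneg) auto
  have "lam * D^2 \<le> M * D" using sk ineq up lam
    by (meson mult_left_mono less_imp_le order_trans)
  then have "D * (lam * D) \<le> D * M" by (simp add: power2_eq_square algebra_simps)
  then have "D = 0 \<or> lam * D \<le> M" using D0 by (auto simp: mult_le_cancel_left)
  then have "D \<le> M / lam" using lam M0 by (auto simp: field_simps)
  then show ?thesis by (simp add: D_def M_def)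
qed


lemma exists_min:
  fixes a :: "'n::finite \<Rightarrow> real" and b :: "'m::finite \<Rightarrow> real"
  assumes a: "a \<in> pos_simplex" and b: "b \<in> pos_simplex"
  shows "\<exists>p. is_min lam a b C p"
proof -
  define S where "S = {x :: real^'m^'n. (\<lambda>i j. x$i$j) \<in> transport_polytope a b}"
  define f where "f = (\<lambda>x :: real^'m^'n. \<Sum>i\<in>UNIV. \<Sum>j\<in>UNIV. C i j * x$i$j + lam * phi (x$i$j))"
  have closed: "closed S"
    unfolding S_def transport_polytope_def mem_Collect_eq
    by (intro closed_Collect_conj closed_Collect_all closed_Collect_le closed_Collect_eq continuous_intros)
  have bnd: "bounded S"
    unfolding bounded_iff
  proof (intro exI ballI)
    fix x assume x: "x \<in> S"
    have "norm x \<le> (\<Sum>i\<in>UNIV. norm (x$i))" by (simp add: norm_vec_def L2_set_le_sum)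
    also have "\<dots> \<le> (\<Sum>i\<in>(UNIV::'n set). \<Sum>j\<in>(UNIV::'m set). (1::real))"
    proof (intro sum_mono)
      fix i
      have "norm (x$i) \<le> (\<Sum>j\<in>UNIV. \<bar>x$i$j\<bar>)" by (rule norm_le_l1_cart)
      also have "\<dots> \<le> (\<Sum>j\<in>(UNIV::'m set). 1)"
      proof (intro sum_mono)
        fix j
        have "x$i$j \<ge> 0" using x by (simp add: S_def transport_polytope_def)
        moreover have "x$i$j \<le> 1" using tp_entry_le1[OF a] x by (simp add: S_def)
        ultimately show "\<bar>x$i$j\<bar> \<le> 1" by simp
      qed
      finally show "norm (x$i) \<le> (\<Sum>j\<in>(UNIV::'m set). 1)" .
    qed
    finally show "norm x \<le> (\<Sum>i\<in>(UNIV::'n set). \<Sum>j\<in>(UNIV::'m set). (1::real))" .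
  qed
  have cpt: "compact S" using closed bnd by (simp add: compact_eq_bounded_closed)
  have vec_in: "(\<chi> i j. q i j) \<in> S" if "q \<in> transport_polytope a b" for q
  proof -
    have eq: "(\<lambda>i j. (\<chi> i j. q i j)$i$j) = q" by (simp add: fun_eq_iff)
    show ?thesis unfolding S_def mem_Collect_eq eq by (rule that)
  qed
  have ne: "S \<noteq> {}" using vec_in[OF tp_prod[OF a b]] by blast
  have cphi: "continuous_on S (\<lambda>x. phi (x$i$j))" for i j
    by (rule continuous_on_compose2[OF phi_cont]) (auto intro!: continuous_intros simp: S_def transport_polytope_def)
  have cont: "continuous_on S f"
    unfolding f_def by (intro continuous_intros cphi)
  obtain x where xS: "x \<in> S" and xmin: "\<forall>y\<in>S. f x \<le> f y"
    using continuous_attains_inf[OF cpt ne cont] by blast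
  define p where "p = (\<lambda>i j. x$i$j)"
  have "is_min lam a b C p"
    unfolding is_min_def
  proof (intro conjI ballI)
    show "p \<in> transport_polytope a b" using xS by (simp add: S_def p_def)
    fix q assume q: "q \<in> transport_polytope a b"
    have "f x \<le> f (\<chi> i j. q i j)" using xmin vec_in[OF q] by blast
    then show "frob_inner C p + lam * neg_entropy p \<le> frob_inner C q + lam * neg_entropy q"
      using Fobj_eq[of lam C p] Fobj_eq[of lam C q] by (simp add: Fobj_def f_def p_def)
  qed
  then show ?thesis by blast
qed

lemma unique_min:
  assumes m1: "is_min lam a b C p1" and m2: "is_min lam a b C p2" and lam: "lam > 0"
    and a: "a \<in> pos_simplex" and b: "b \<in> pos_simplex"
  shows "p1 = p2"
proof -
  have "mat_norm1 (\<lambda>i j. p1 i j - p2 i j) \<le> mat_norm_inf (\<lambda>i j. C i j - C i j) / lam"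
    by (rule main_bound[OF m1 m2 lam a b])
  also have "mat_norm_inf (\<lambda>i j. C i j - C i j) = 0"
    by (simp add: mat_norm_inf_def)
  finally have le: "(\<Sum>i\<in>UNIV. \<Sum>j\<in>UNIV. \<bar>p1 i j - p2 i j\<bar>) \<le> 0" by (simp add: mat_norm1_def)
  have "\<bar>p1 i j - p2 i j\<bar> \<le> 0" for i j
  proof -
    have "\<bar>p1 i j - p2 i j\<bar> \<le> (\<Sum>j\<in>UNIV. \<bar>p1 i j - p2 i j\<bar>)" by (rule member_le_sum) auto
    also have "\<dots> \<le> (\<Sum>i\<in>UNIV. \<Sum>j\<in>UNIV. \<bar>p1 i j - p2 i j\<bar>)"
      by (rule member_le_sum[where f = "\<lambda>i. \<Sum>j\<in>UNIV. \<bar>p1 i j - p2 i j\<bar>"]) (auto intro: sum_nonneg)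
    finally show ?thesis using le by linarith
  qed
  then show ?thesis by (intro ext) (metis abs_le_zero_iff eq_iff_diff_eq_0)
qed

lemma Phi_is_min:
  assumes lam: "lam > 0" and a: "a \<in> pos_simplex" and b: "b \<in> pos_simplex"
  shows "is_min lam a b C (Phi lam a b C)"
proof -
  have ex1: "\<exists>!p. is_min lam a b C p"
    using exists_min[OF a b] unique_min[OF _ _ lam a b] by blast
  show ?thesis unfolding Phi_def using theI'[OF ex1[unfolded is_min_def]] by (simp add: is_min_def)
qed

theorem lemma1:
  fixes a :: "'n::finite \<Rightarrow> real" and b :: "'m::finite \<Rightarrow> real"
    and lam :: real and C1 C2 :: "'n \<Rightarrow> 'm \<Rightarrow> real"
  assumes "a \<in> pos_simplex" and "b \<in> pos_simplex" and "lam > 0"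
  shows "mat_norm1 (\<lambda>i j. Phi lam a b C1 i j - Phi lam a b C2 i j)
           \<le> mat_norm_inf (\<lambda>i j. C1 i j - C2 i j) / lam"
  by (rule main_bound[OF Phi_is_min[OF assms(3,1,2)] Phi_is_min[OF assms(3,1,2)] assms(3,1,2)])

end
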